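(* Let $G$ be an abelian group and let $(a_n)_{n\in\omega}$ be a $T$-sequence in $G$. Put $A=\{0,a_n,-a_n : n\in\omega\}$ and let $A_n$ denote the sum of $n$ copies of $A$. Then the family $\{F+A_n : F\in[G]^{<\omega},\ n\in\omega\}$ is a base for the group ideal $\mathcal{C}_{\tau(a_n)}$ (i.e. each $F+A_n$ belongs to $\mathcal{C}_{\tau(a_n)}$ and every member of $\mathcal{C}_{\tau(a_n)}$ is contained in some $F+A_n$), and $\mathcal{C}_{\tau(a_n)}=\mathcal{S}_{\tau(a_n)}$. If moreover $G$ is generated by $\{a_n:n\in\omega\}$, then $\{A_n:n\in\omega\}$ is a base for $\mathcal{C}_{\tau(a_n)}$.
   Context: A sequence $(a_n)_{n\in\omega}$ in an abelian group $G$ is a $T$-sequence if there exists a Hausdorff group topology on $G$ in which $(a_n)$ converges to $0$; $\tau(a_n)$ denotes the strongest group topology on $G$ in which $(a_n)$ converges to $0$. $[G]^{<\omega}$ is the family of finite subsets of $G$. For a topological group $(G,\tau)$, $\mathcal{C}_\tau$ is the family of precompact subsets of $G$ (subsets with compact closure), and $\mathcal{S}_\tau$ is the smallest group ideal on $G$ containing every set of the form $\{x\}\cup\{x_n:n\in\omega\}$ where $(x_n)$ is a sequence converging to $x$ in $(G,\tau)$. A group ideal on a group $G$ is a family $\mathcal{I}$ of subsets of $G$ containing all finite subsets and such that $A,B\in\mathcal{I}$, $C\subseteq A$ imply $AB^{-1}\in\mathcal{I}$ and $C\in\mathcal{I}$. *)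

theory Defs
  imports "HOL-Analysis.Analysis"
begin

definition group_topology :: "'a::ab_group_add topology \<Rightarrow> bool" where
  "group_topology T \<longleftrightarrow> topspace T = UNIV
     \<and> continuous_map (prod_topology T T) T (\<lambda>(x, y). x + y)
     \<and> continuous_map T T uminus"

definition T_sequence :: "(nat \<Rightarrow> 'a::ab_group_add) \<Rightarrow> bool" where
  "T_sequence a \<longleftrightarrow> (\<exists>T. group_topology T \<and> Hausdorff_space T \<and> limitin T a 0 sequentially)"

definition tau :: "(nat \<Rightarrow> 'a::ab_group_add) \<Rightarrow> 'a topology" where
  "tau a = (THE T. group_topology T \<and> limitin T a 0 sequentially
              \<and> (\<forall>T'. group_topology T' \<and> limitin T' a 0 sequentially
                      \<longrightarrow> (\<forall>U. openin T' U \<longrightarrow> openin T U)))"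

definition setsum :: "'a::ab_group_add set \<Rightarrow> 'a set \<Rightarrow> 'a set" where
  "setsum A B = {x + y | x y. x \<in> A \<and> y \<in> B}"

definition setdiff :: "'a::ab_group_add set \<Rightarrow> 'a set \<Rightarrow> 'a set" where
  "setdiff A B = {x - y | x y. x \<in> A \<and> y \<in> B}"

fun nsum :: "'a::ab_group_add set \<Rightarrow> nat \<Rightarrow> 'a set" where
  "nsum A 0 = {0}"
| "nsum A (Suc n) = setsum A (nsum A n)"

definition group_ideal :: "'a::ab_group_add set set \<Rightarrow> bool" where
  "group_ideal I \<longleftrightarrow> (\<forall>F. finite F \<longrightarrow> F \<in> I)
     \<and> (\<forall>A\<in>I. \<forall>B\<in>I. setdiff A B \<in> I)
     \<and> (\<forall>A\<in>I. \<forall>C. C \<subseteq> A \<longrightarrow> C \<in> I)"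

definition precompacts :: "'a topology \<Rightarrow> 'a set set" where
  "precompacts T = {B. B \<subseteq> topspace T \<and> compactin T (T closure_of B)}"

definition seq_ideal :: "'a::ab_group_add topology \<Rightarrow> 'a set set" where
  "seq_ideal T = \<Inter>{I. group_ideal I \<and>
      (\<forall>x xs. limitin T xs x sequentially \<longrightarrow> insert x (range xs) \<in> I)}"

definition is_subgroup :: "'a::ab_group_add set \<Rightarrow> bool" where
  "is_subgroup S \<longleftrightarrow> 0 \<in> S \<and> (\<forall>x\<in>S. \<forall>y\<in>S. x - y \<in> S)"

definition gen_subgroup :: "'a::ab_group_add set \<Rightarrow> 'a set" where
  "gen_subgroup X = \<Inter>{S. is_subgroup S \<and> X \<subseteq> S}"

definition is_base :: "'a set set \<Rightarrow> 'a set set \<Rightarrow> bool" where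
  "is_base \<B> I \<longleftrightarrow> \<B> \<subseteq> I \<and> (\<forall>B\<in>I. \<exists>D\<in>\<B>. B \<subseteq> D)"

end

theory Submission
  imports Defs
begin


definition Am :: "(nat \<Rightarrow> 'a::ab_group_add) \<Rightarrow> nat \<Rightarrow> 'a set" where
  "Am a k = {0} \<union> a ` {k..} \<union> (\<lambda>n. - a n) ` {k..}"

definition UU :: "(nat \<Rightarrow> 'a::ab_group_add) \<Rightarrow> (nat \<Rightarrow> nat) \<Rightarrow> 'a set" where
  "UU a m = {\<Sum>i<k. f i | k f. \<forall>i<k. f i \<in> Am a (m i)}"

lemma Am_anti: "p \<le> q \<Longrightarrow> Am a q \<subseteq> Am a p"
  unfolding Am_def by auto

lemma zero_Am[simp]: "0 \<in> Am a k" unfolding Am_def by auto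

lemma Am_uminus: "x \<in> Am a k \<Longrightarrow> - x \<in> Am a k" unfolding Am_def by auto

lemma zero_UU[simp]: "0 \<in> UU a m"
  unfolding UU_def by (rule CollectI, rule exI[of _ 0]) auto

lemma UU_uminus: assumes "x \<in> UU a m" shows "- x \<in> UU a m"
proof -
  obtain k f where x: "x = (\<Sum>i<k. f i)" and f: "\<forall>i<k. f i \<in> Am a (m i)"
    using assms unfolding UU_def by auto
  have "- x = (\<Sum>i<k. - f i)" using x by (simp add: sum_negf)
  moreover have "\<forall>i<k. - f i \<in> Am a (m i)" using f Am_uminus by blast
  ultimately show ?thesis unfolding UU_def by blast
qed

lemma UU_mono: assumes "\<And>k. m k \<le> m' k" shows "UU a m' \<subseteq> UU a m"
  unfolding UU_def using Am_anti[OF assms] by blast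

lemma sum_interleave:
  fixes h :: "nat \<Rightarrow> 'a::comm_monoid_add"
  shows "(\<Sum>p<2*N. h p) = (\<Sum>i<N. h (2*i) + h (2*i+1))"
  by (induction N) (simp_all add: algebra_simps)

lemma sum_if_lt:
  fixes f :: "nat \<Rightarrow> 'a::comm_monoid_add"
  assumes "j \<le> N" shows "(\<Sum>i<N. if i < j then f i else 0) = (\<Sum>i<j. f i)"
proof -
  have "(\<Sum>i<N. if i < j then f i else 0) = (\<Sum>i\<in>{..<N} \<inter> {i. i<j}. f i)"
    by (simp add: sum.inter_restrict)
  also have "{..<N} \<inter> {i. i<j} = {..<j}" using assms by auto
  finally show ?thesis .
qed

lemma UU_half: "\<exists>m'. \<forall>x\<in>UU a m'. \<forall>y\<in>UU a m'. x + y \<in> UU a m"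
proof (intro exI ballI)
  let ?m' = "\<lambda>k. m (2*k) + m (2*k+1)"
  fix x y assume "x \<in> UU a ?m'" "y \<in> UU a ?m'"
  then obtain j f l g where x: "x = (\<Sum>i<j. f i)" and f: "\<forall>i<j. f i \<in> Am a (?m' i)"
    and y: "y = (\<Sum>i<l. g i)" and g: "\<forall>i<l. g i \<in> Am a (?m' i)"
    unfolding UU_def by auto
  define N where "N = max j l"
  define f' where "f' i = (if i < j then f i else 0)" for i
  define g' where "g' i = (if i < l then g i else 0)" for i
  define h where "h p = (if even p then f' (p div 2) else g' (p div 2))" for p
  have "(\<Sum>p<2*N. h p) = (\<Sum>i<N. h (2*i) + h (2*i+1))" by (rule sum_interleave)
  also have "\<dots> = (\<Sum>i<N. f' i) + (\<Sum>i<N. g' i)" by (simp add: h_def sum.distrib)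
  also have "\<dots> = x + y" unfolding f'_def g'_def x y
    by (simp add: sum_if_lt N_def)
  finally have eq: "x + y = (\<Sum>p<2*N. h p)" by simp
  have "\<forall>p<2*N. h p \<in> Am a (m p)"
  proof (intro allI impI)
    fix p assume "p < 2*N"
    show "h p \<in> Am a (m p)"
    proof (cases "even p")
      case True
      then obtain i where p: "p = 2*i" by blast
      have "f' i \<in> Am a (m p)"
        using f Am_anti[of "m p" "?m' i" a] p unfolding f'_def by auto
      then show ?thesis using True p unfolding h_def by simp
    next
      case False
      then obtain i where p: "p = 2*i+1" by (metis oddE)
      have "g' i \<in> Am a (m p)"
        using g Am_anti[of "m p" "?m' i" a] p unfolding g'_def by auto
      then show ?thesis using False p unfolding h_def by simp
    qed
  qed
  then show "x + y \<in> UU a m" using eq unfolding UU_def by blast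
qed

lemma UU_max: "\<exists>m''. UU a m'' \<subseteq> UU a m \<inter> UU a m'"
  using UU_mono[of m "\<lambda>k. max (m k) (m' k)" a] UU_mono[of m' "\<lambda>k. max (m k) (m' k)" a]
  by auto

lemma a_in_UU: "n \<ge> m 0 \<Longrightarrow> a n \<in> UU a m"
  unfolding UU_def
  by (rule CollectI, rule exI[of _ 1], rule exI[of _ "\<lambda>_. a n"]) (auto simp: Am_def)




definition opT0 :: "(nat \<Rightarrow> 'a::ab_group_add) \<Rightarrow> 'a set \<Rightarrow> bool" where
  "opT0 a V \<longleftrightarrow> (\<forall>x\<in>V. \<exists>m. (\<lambda>u. x + u) ` UU a m \<subseteq> V)"

lemma istopology_opT0: "istopology (opT0 a)"
  unfolding istopology_def
proof (intro conjI allI impI)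
  fix S T assume S: "opT0 a S" and T: "opT0 a T"
  show "opT0 a (S \<inter> T)" unfolding opT0_def
  proof
    fix x assume "x \<in> S \<inter> T"
    then obtain m m' where "(\<lambda>u. x + u) ` UU a m \<subseteq> S" "(\<lambda>u. x + u) ` UU a m' \<subseteq> T"
      using S T unfolding opT0_def by blast
    moreover obtain m'' where "UU a m'' \<subseteq> UU a m \<inter> UU a m'" using UU_max by blast
    ultimately show "\<exists>m. (\<lambda>u. x + u) ` UU a m \<subseteq> S \<inter> T" by blast
  qed
next
  fix K assume "\<forall>S\<in>K. opT0 a S"
  then show "opT0 a (\<Union>K)" unfolding opT0_def by (meson Union_iff Union_upper subset_trans)
qed

definition T0 :: "(nat \<Rightarrow> 'a::ab_group_add) \<Rightarrow> 'a topology" where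
  "T0 a = topology (opT0 a)"

lemma openin_T0: "openin (T0 a) V \<longleftrightarrow> (\<forall>x\<in>V. \<exists>m. (\<lambda>u. x + u) ` UU a m \<subseteq> V)"
  unfolding T0_def topology_inverse'[OF istopology_opT0] opT0_def by (rule refl)

lemma topspace_T0[simp]: "topspace (T0 a) = UNIV"
proof -
  have "openin (T0 a) UNIV" unfolding openin_T0 by auto
  then show ?thesis using openin_subset by blast
qed

lemma openin_T0_translate:
  assumes "openin (T0 a) V" shows "openin (T0 a) ((\<lambda>u. y + u) ` V)"
  unfolding openin_T0
proof
  fix x assume "x \<in> (\<lambda>u. y + u) ` V"
  then obtain v where v: "v \<in> V" "x = y + v" by blast
  then obtain m where "(\<lambda>u. v + u) ` UU a m \<subseteq> V" using assms unfolding openin_T0 by blast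
  have "(\<lambda>u. x + u) ` UU a m \<subseteq> (\<lambda>u. y + u) ` V"
  proof
    fix z assume "z \<in> (\<lambda>u. x + u) ` UU a m"
    then obtain w where w: "w \<in> UU a m" "z = x + w" by blast
    then have "v + w \<in> V" using \<open>(\<lambda>u. v + u) ` UU a m \<subseteq> V\<close> by blast
    moreover have "z = y + (v + w)" using w v by (simp add: add.assoc)
    ultimately show "z \<in> (\<lambda>u. y + u) ` V" by blast
  qed
  then show "\<exists>m. (\<lambda>u. x + u) ` UU a m \<subseteq> (\<lambda>u. y + u) ` V" by blast
qed

definition II :: "(nat \<Rightarrow> 'a::ab_group_add) \<Rightarrow> (nat \<Rightarrow> nat) \<Rightarrow> 'a set" where
  "II a m = {x. \<exists>m'. (\<lambda>u. x + u) ` UU a m' \<subseteq> UU a m}"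

lemma II_sub: "II a m \<subseteq> UU a m"
  unfolding II_def using zero_UU by force

lemma zero_II: "0 \<in> II a m"
  unfolding II_def by auto

lemma open_II: "openin (T0 a) (II a m)"
  unfolding openin_T0
proof
  fix x assume "x \<in> II a m"
  then obtain m' where m': "(\<lambda>u. x + u) ` UU a m' \<subseteq> UU a m" unfolding II_def by blast
  obtain m'' where m'': "\<forall>x\<in>UU a m''. \<forall>y\<in>UU a m''. x + y \<in> UU a m'" using UU_half by blast
  have "(\<lambda>u. x + u) ` UU a m'' \<subseteq> II a m"
  proof
    fix y assume "y \<in> (\<lambda>u. x + u) ` UU a m''"
    then obtain u where u: "u \<in> UU a m''" "y = x + u" by blast
    have "(\<lambda>w. y + w) ` UU a m'' \<subseteq> UU a m"
    proof
      fix z assume "z \<in> (\<lambda>w. y + w) ` UU a m''"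
      then obtain w where "w \<in> UU a m''" "z = y + w" by blast
      then have "z = x + (u + w)" "u + w \<in> UU a m'" using u m'' by (auto simp: add.assoc)
      then show "z \<in> UU a m" using m' by blast
    qed
    then show "y \<in> II a m" unfolding II_def by blast
  qed
  then show "\<exists>m'. (\<lambda>u. x + u) ` UU a m' \<subseteq> II a m" by blast
qed

lemma group_topology_T0: "group_topology (T0 a)"
  unfolding group_topology_def
proof (intro conjI)
  show "topspace (T0 a) = UNIV" by simp
  show "continuous_map (prod_topology (T0 a) (T0 a)) (T0 a) (\<lambda>(x, y). x + y)"
    unfolding continuous_map_def
  proof (intro conjI allI impI)
    fix V assume V: "openin (T0 a) V"
    show "openin (prod_topology (T0 a) (T0 a))
             ({z \<in> topspace (prod_topology (T0 a) (T0 a)). (case z of (x, y) \<Rightarrow> x + y) \<in> V})"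
      unfolding openin_prod_topology_alt
    proof (intro allI impI)
      fix x y assume "(x, y) \<in> {z \<in> topspace (prod_topology (T0 a) (T0 a)). (case z of (x, y) \<Rightarrow> x + y) \<in> V}"
      then have "x + y \<in> V" by simp
      then obtain m where m: "(\<lambda>u. (x + y) + u) ` UU a m \<subseteq> V" using V unfolding openin_T0 by blast
      obtain m' where m': "\<forall>x\<in>UU a m'. \<forall>y\<in>UU a m'. x + y \<in> UU a m" using UU_half by blast
      let ?U = "(\<lambda>u. x + u) ` II a m'" and ?V = "(\<lambda>u. y + u) ` II a m'"
      have "?U \<times> ?V \<subseteq> {z \<in> topspace (prod_topology (T0 a) (T0 a)). (case z of (x, y) \<Rightarrow> x + y) \<in> V}"
      proof
        fix z assume "z \<in> ?U \<times> ?V"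
        then obtain u v where uv: "u \<in> II a m'" "v \<in> II a m'" "z = (x + u, y + v)" by blast
        then have "u + v \<in> UU a m" using m' II_sub by blast
        then have "(x + y) + (u + v) \<in> V" using m by blast
        then show "z \<in> {z \<in> topspace (prod_topology (T0 a) (T0 a)). (case z of (x, y) \<Rightarrow> x + y) \<in> V}"
          using uv by (simp add: algebra_simps)
      qed
      moreover have "x \<in> ?U" "y \<in> ?V" using zero_II by force+
      moreover have "openin (T0 a) ?U" "openin (T0 a) ?V" by (rule openin_T0_translate[OF open_II])+
      ultimately show "\<exists>U V'. openin (T0 a) U \<and> openin (T0 a) V' \<and> x \<in> U \<and> y \<in> V' \<and> U \<times> V' \<subseteq>
           {z \<in> topspace (prod_topology (T0 a) (T0 a)). (case z of (x, y) \<Rightarrow> x + y) \<in> V}"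
        by blast
    qed
  qed auto
  show "continuous_map (T0 a) (T0 a) uminus"
    unfolding continuous_map_def
  proof (intro conjI allI impI)
    fix V assume V: "openin (T0 a) V"
    show "openin (T0 a) {x \<in> topspace (T0 a). - x \<in> V}"
      unfolding openin_T0
    proof
      fix x assume "x \<in> {x \<in> topspace (T0 a). - x \<in> V}"
      then obtain m where m: "(\<lambda>u. - x + u) ` UU a m \<subseteq> V" using V unfolding openin_T0 by auto
      have "(\<lambda>u. x + u) ` UU a m \<subseteq> {x \<in> topspace (T0 a). - x \<in> V}"
      proof
        fix z assume "z \<in> (\<lambda>u. x + u) ` UU a m"
        then obtain u where u: "u \<in> UU a m" "z = x + u" by blast
        then have "- x + (- u) \<in> V" using m UU_uminus by blast
        then show "z \<in> {x \<in> topspace (T0 a). - x \<in> V}" using u by (simp add: algebra_simps)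
      qed
      then show "\<exists>m. (\<lambda>u. x + u) ` UU a m \<subseteq> {x \<in> topspace (T0 a). - x \<in> V}" by blast
    qed
  qed auto
qed

lemma limit_T0: "limitin (T0 a) a 0 sequentially"
  unfolding limitin_def
proof (intro conjI allI impI)
  fix V assume "openin (T0 a) V \<and> 0 \<in> V"
  then obtain m where "(\<lambda>u. 0 + u) ` UU a m \<subseteq> V" unfolding openin_T0 by blast
  then have "\<forall>n\<ge>m 0. a n \<in> V" using a_in_UU by fastforce
  then show "\<forall>\<^sub>F n in sequentially. a n \<in> V" using eventually_sequentially by blast
qed auto




lemma gt_translate_cont:
  assumes "group_topology T" shows "continuous_map T T (\<lambda>u. x + u)"
proof -
  have c: "continuous_map (prod_topology T T) T (\<lambda>(x, y). x + y)" and ts: "topspace T = UNIV"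
    using assms unfolding group_topology_def by auto
  have "continuous_map T (prod_topology T T) (\<lambda>u. (x, u))"
    by (rule continuous_map_pairedI) (simp_all add: ts)
  from continuous_map_compose[OF this c] show ?thesis by (simp add: o_def)
qed

lemma gt_half:
  assumes "group_topology T" "openin T W" "0 \<in> W"
  shows "\<exists>W'. openin T W' \<and> 0 \<in> W' \<and> (\<forall>x\<in>W'. \<forall>y\<in>W'. x + y \<in> W)"
proof -
  have c: "continuous_map (prod_topology T T) T (\<lambda>(x, y). x + y)" and ts: "topspace T = UNIV"
    using assms unfolding group_topology_def by auto
  define S where "S = {z \<in> topspace (prod_topology T T). (\<lambda>(x, y). x + y) z \<in> W}"
  have o: "openin (prod_topology T T) S"
    unfolding S_def by (rule openin_continuous_map_preimage[OF c assms(2)])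
  have z: "(0, 0) \<in> S"
    using assms(3) ts by (simp add: S_def)
  obtain U V where UV: "openin T U" "openin T V" "0 \<in> U" "0 \<in> V" "U \<times> V \<subseteq> S"
    using openin_prod_topology_alt[THEN iffD1, rule_format, OF o z] by blast
  have "\<forall>x\<in>U \<inter> V. \<forall>y\<in>U \<inter> V. x + y \<in> W"
  proof (intro ballI)
    fix x y assume "x \<in> U \<inter> V" "y \<in> U \<inter> V"
    then have "(x, y) \<in> S" using UV(5) by blast
    then show "x + y \<in> W" by (simp add: S_def)
  qed
  moreover have "openin T (U \<inter> V)" using UV(1,2) by (rule openin_Int)
  moreover have "0 \<in> U \<inter> V" using UV by simp
  ultimately show ?thesis by blast
qed

lemma gt_UU:
  assumes gt: "group_topology T" and lim: "limitin T a 0 sequentially"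
    and W: "openin T W" "0 \<in> W"
  shows "\<exists>m. UU a m \<subseteq> W"
proof -
  have "\<forall>W. \<exists>W'. (openin T W \<and> 0 \<in> W) \<longrightarrow> (openin T W' \<and> 0 \<in> W' \<and> (\<forall>x\<in>W'. \<forall>y\<in>W'. x + y \<in> W))"
    using gt_half[OF gt] by blast
  then obtain h where h: "\<And>W. openin T W \<Longrightarrow> 0 \<in> W \<Longrightarrow>
      openin T (h W) \<and> 0 \<in> h W \<and> (\<forall>x\<in>h W. \<forall>y\<in>h W. x + y \<in> W)"
    by metis
  define Ws where "Ws k = (h ^^ k) W" for k
  have Wo: "openin T (Ws k) \<and> 0 \<in> Ws k" for k
    by (induction k) (use W h in \<open>auto simp: Ws_def\<close>)
  have Wadd: "x \<in> Ws (Suc k) \<Longrightarrow> y \<in> Ws (Suc k) \<Longrightarrow> x + y \<in> Ws k" for x y k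
    using h[of "Ws k"] Wo[of k] by (auto simp: Ws_def)
  have sums: "\<forall>j f. (\<forall>i<k. f i \<in> Ws (j+i+1)) \<longrightarrow> (\<Sum>i<k. f i) \<in> Ws j" for k
  proof (induction k)
    case 0 then show ?case using Wo by simp
  next
    case (Suc k)
    show ?case
    proof (intro allI impI)
      fix j f assume f: "\<forall>i<Suc k. f i \<in> Ws (j+i+1)"
      have "\<forall>i<k. f (Suc i) \<in> Ws (Suc j + i + 1)" using f by auto
      then have "(\<Sum>i<k. f (Suc i)) \<in> Ws (Suc j)"
        using Suc.IH[rule_format, of "\<lambda>i. f (Suc i)" "Suc j"] by blast
      moreover have "f 0 \<in> Ws (Suc j)" using f by auto
      ultimately have "f 0 + (\<Sum>i<k. f (Suc i)) \<in> Ws j" using Wadd by blast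
      then show "(\<Sum>i<Suc k. f i) \<in> Ws j" by (simp only: sum.lessThan_Suc_shift)
    qed
  qed
  have cu: "continuous_map T T uminus" using gt unfolding group_topology_def by auto
  have lim2: "limitin T (\<lambda>n. - a n) 0 sequentially"
    using continuous_map_limit[OF cu lim] by (simp add: o_def)
  have "\<forall>i. \<exists>M. \<forall>n\<ge>M. a n \<in> Ws (Suc i) \<and> - a n \<in> Ws (Suc i)"
  proof
    fix i
    have "eventually (\<lambda>n. a n \<in> Ws (Suc i)) sequentially"
      "eventually (\<lambda>n. - a n \<in> Ws (Suc i)) sequentially"
      using lim lim2 Wo[of "Suc i"] unfolding limitin_def by blast+
    then have "eventually (\<lambda>n. a n \<in> Ws (Suc i) \<and> - a n \<in> Ws (Suc i)) sequentially"
      by (rule eventually_conj)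
    then show "\<exists>M. \<forall>n\<ge>M. a n \<in> Ws (Suc i) \<and> - a n \<in> Ws (Suc i)"
      unfolding eventually_sequentially .
  qed
  then obtain M where M: "\<And>i n. n \<ge> M i \<Longrightarrow> a n \<in> Ws (Suc i) \<and> - a n \<in> Ws (Suc i)"
    by metis
  have AmW: "Am a (M i) \<subseteq> Ws (Suc i)" for i
    using M[of i] Wo[of "Suc i"] unfolding Am_def by auto
  have "UU a M \<subseteq> Ws 0"
  proof
    fix x assume "x \<in> UU a M"
    then obtain k f where x: "x = (\<Sum>i<k. f i)" and f: "\<forall>i<k. f i \<in> Am a (M i)"
      unfolding UU_def by auto
    then have "\<forall>i<k. f i \<in> Ws (0+i+1)" using AmW by auto
    then show "x \<in> Ws 0" using sums x by blast
  qed
  then show ?thesis unfolding Ws_def by auto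
qed

lemma gt_open_T0:
  assumes gt: "group_topology T" and lim: "limitin T a 0 sequentially" and V: "openin T V"
  shows "openin (T0 a) V"
  unfolding openin_T0
proof
  fix x assume x: "x \<in> V"
  have ts: "topspace T = UNIV" using gt unfolding group_topology_def by auto
  have o: "openin T {u \<in> topspace T. x + u \<in> V}"
    by (rule openin_continuous_map_preimage[OF gt_translate_cont[OF gt] V])
  have z: "0 \<in> {u \<in> topspace T. x + u \<in> V}" using x ts by simp
  obtain m where "UU a m \<subseteq> {u \<in> topspace T. x + u \<in> V}"
    using gt_UU[OF gt lim o z] by blast
  then have "(\<lambda>u. x + u) ` UU a m \<subseteq> V" by blast
  then show "\<exists>m. (\<lambda>u. x + u) ` UU a m \<subseteq> V" by blast
qed

lemma tau_eq: "tau a = T0 a"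
  unfolding tau_def
proof (rule the_equality)
  show "group_topology (T0 a) \<and> limitin (T0 a) a 0 sequentially \<and>
    (\<forall>T'. group_topology T' \<and> limitin T' a 0 sequentially \<longrightarrow> (\<forall>U. openin T' U \<longrightarrow> openin (T0 a) U))"
  proof (intro conjI allI impI)
    fix T' U assume "group_topology T' \<and> limitin T' a 0 sequentially" "openin T' U"
    then show "openin (T0 a) U" using gt_open_T0 by blast
  qed (rule group_topology_T0, rule limit_T0)
next
  fix T assume T: "group_topology T \<and> limitin T a 0 sequentially \<and>
    (\<forall>T'. group_topology T' \<and> limitin T' a 0 sequentially \<longrightarrow> (\<forall>U. openin T' U \<longrightarrow> openin T U))"
  have 1: "openin T S" if "openin (T0 a) S" for S
    using T group_topology_T0 limit_T0 that by blast
  have 2: "openin (T0 a) S" if "openin T S" for S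
    using T gt_open_T0 that by blast
  show "T = T0 a"
    unfolding topology_eq using 1 2 by blast
qed

lemma Hausdorff_T0:
  assumes "T_sequence a" shows "Hausdorff_space (T0 a)"
proof -
  obtain T where T: "group_topology T" "Hausdorff_space T" "limitin T a 0 sequentially"
    using assms unfolding T_sequence_def by blast
  have ts: "topspace T = UNIV" using T unfolding group_topology_def by auto
  show ?thesis unfolding Hausdorff_space_def
  proof (intro allI impI)
    fix x y :: 'a assume "x \<in> topspace (T0 a) \<and> y \<in> topspace (T0 a) \<and> x \<noteq> y"
    then have "x \<in> topspace T \<and> y \<in> topspace T \<and> x \<noteq> y" using ts by simp
    then obtain U V where UV: "openin T U" "openin T V" "x \<in> U" "y \<in> V" "disjnt U V"
      using T(2) unfolding Hausdorff_space_def by blast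
    have "openin (T0 a) U" "openin (T0 a) V" using gt_open_T0[OF T(1) T(3)] UV(1,2) by auto
    then show "\<exists>U V. openin (T0 a) U \<and> openin (T0 a) V \<and> x \<in> U \<and> y \<in> V \<and> disjnt U V"
      using UV(3-5) by blast
  qed
qed




lemma nsum_sum: "(\<forall>i<k. f i \<in> A) \<Longrightarrow> (\<Sum>i<k. f i) \<in> nsum A k"
proof (induction k)
  case 0 then show ?case by simp
next
  case (Suc k)
  then have "f k + (\<Sum>i<k. f i) \<in> setsum A (nsum A k)" unfolding setsum_def by auto
  then show ?case by (simp add: add.commute)
qed

lemma nsum_Suc_mono: assumes "0 \<in> A" shows "nsum A k \<subseteq> nsum A (Suc k)"
proof
  fix x assume "x \<in> nsum A k"
  then have "x = 0 + x \<and> 0 \<in> A \<and> x \<in> nsum A k" using assms by simp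
  then show "x \<in> nsum A (Suc k)" unfolding nsum.simps setsum_def by blast
qed

lemma nsum_mono: assumes "0 \<in> A" "k \<le> j" shows "nsum A k \<subseteq> nsum A j"
  using assms(2)
proof (induction j)
  case 0 then show ?case by simp
next
  case (Suc j)
  then show ?case using nsum_Suc_mono[OF assms(1), of j]
    by (metis le_Suc_eq order_refl subset_trans)
qed

lemma nsum_add: "setsum (nsum A p) (nsum A q) \<subseteq> nsum A (p + q)"
proof (induction p)
  case 0 then show ?case by (auto simp: setsum_def)
next
  case (Suc p)
  show ?case
  proof
    fix z assume "z \<in> setsum (nsum A (Suc p)) (nsum A q)"
    then obtain b x y where "b \<in> A" "x \<in> nsum A p" "y \<in> nsum A q" "z = (b + x) + y"
      by (auto simp: setsum_def)
    moreover then have "x + y \<in> nsum A (p + q)" using Suc.IH by (auto simp: setsum_def)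
    ultimately show "z \<in> nsum A (Suc p + q)" by (auto simp: setsum_def add.assoc)
  qed
qed

lemma nsum_uminus: assumes "\<forall>x\<in>A. - x \<in> A" shows "x \<in> nsum A k \<Longrightarrow> - x \<in> nsum A k"
proof (induction k arbitrary: x)
  case 0 then show ?case by simp
next
  case (Suc k)
  then obtain b y where "b \<in> A" "y \<in> nsum A k" "x = b + y" by (auto simp: setsum_def)
  moreover then have "- b \<in> A" "- y \<in> nsum A k" using assms Suc.IH by auto
  moreover have "- x = (- b) + (- y)" using calculation by simp
  ultimately show ?case unfolding nsum.simps setsum_def by blast
qed

lemma sum_split_shift:
  fixes f :: "nat \<Rightarrow> 'a::comm_monoid_add"
  shows "(\<Sum>q<j+n. f q) = (\<Sum>q<j. f q) + (\<Sum>r<n. f (j + r))"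
  by (induction n) (simp_all add: add.assoc)

lemma Am0: "Am a 0 = insert 0 (range a) \<union> insert 0 (range (\<lambda>n. - a n))"
  unfolding Am_def by auto

lemma compact_Am0: "compactin (T0 a) (Am a 0)"
proof -
  have cu: "continuous_map (T0 a) (T0 a) uminus" using group_topology_T0 unfolding group_topology_def by auto
  have l2: "limitin (T0 a) (\<lambda>n. - a n) 0 sequentially"
    using continuous_map_limit[OF cu limit_T0[of a]] by (simp add: o_def)
  have "compactin (T0 a) (insert 0 (range a))"
    by (rule compactin_sequence_with_limit[OF limit_T0]) auto
  moreover have "compactin (T0 a) (insert 0 (range (\<lambda>n. - a n)))"
    by (rule compactin_sequence_with_limit[OF l2]) auto
  ultimately show ?thesis unfolding Am0 by (rule compactin_Un)
qed

lemma compact_setsum: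
  assumes "compactin (T0 a) X" "compactin (T0 a) Y"
  shows "compactin (T0 a) (setsum X Y)"
proof (cases "X = {} \<or> Y = {}")
  case True then have "setsum X Y = {}" by (auto simp: setsum_def)
  then show ?thesis by simp
next
  case False
  have c: "continuous_map (prod_topology (T0 a) (T0 a)) (T0 a) (\<lambda>(x, y). x + y)"
    using group_topology_T0 unfolding group_topology_def by auto
  have "compactin (prod_topology (T0 a) (T0 a)) (X \<times> Y)" using assms by (simp add: compactin_Times)
  from image_compactin[OF this c] show ?thesis
    by (simp add: setsum_def Setcompr_eq_image image_def) (smt (verit) Collect_cong case_prod_conv mem_Sigma_iff prod.collapse)
qed




lemma compact_nsum: "compactin (T0 a) (nsum (Am a 0) n)"
  by (induction n) (simp_all add: compact_setsum compact_Am0 finite_imp_compactin)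

lemma compact_F_nsum: "finite F \<Longrightarrow> compactin (T0 a) (setsum F (nsum (Am a 0) n))"
  by (rule compact_setsum) (simp_all add: compact_nsum finite_imp_compactin)

lemma TB:
  assumes K: "compactin (T0 a) K"
  shows "\<exists>F. finite F \<and> (\<forall>x\<in>K. \<exists>f\<in>F. x - f \<in> UU a m)"
proof -
  define C where "C = (\<lambda>y. (\<lambda>u. y + u) ` II a m) ` K"
  have "\<forall>V\<in>C. openin (T0 a) V" unfolding C_def using openin_T0_translate[OF open_II] by blast
  moreover have "K \<subseteq> \<Union>C"
  proof
    fix x assume "x \<in> K"
    moreover have "x \<in> (\<lambda>u. x + u) ` II a m" using zero_II by force
    ultimately show "x \<in> \<Union>C" unfolding C_def by blast
  qed
  ultimately obtain D where D: "finite D" "D \<subseteq> C" "K \<subseteq> \<Union>D"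
    using K unfolding compactin_def by meson
  obtain F where F: "F \<subseteq> K" "finite F" "D = (\<lambda>y. (\<lambda>u. y + u) ` II a m) ` F"
    using finite_subset_image[OF D(1) D(2)[unfolded C_def]] by blast
  have "\<forall>x\<in>K. \<exists>f\<in>F. x - f \<in> UU a m"
  proof
    fix x assume "x \<in> K"
    then obtain f u where "f \<in> F" "u \<in> II a m" "x = f + u" using D(3) F(3) by blast
    then show "\<exists>f\<in>F. x - f \<in> UU a m" using II_sub by force
  qed
  then show ?thesis using F(2) by blast
qed

fun Xs :: "('a set \<Rightarrow> nat \<Rightarrow> 'a) \<Rightarrow> nat \<Rightarrow> 'a set" where
  "Xs c 0 = {}"
| "Xs c (Suc j) = insert (c (Xs c j) j) (Xs c j)"

lemma finite_Xs: "finite (Xs c j)" by (induction j) auto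

lemma Xs_mono: "i \<le> j \<Longrightarrow> Xs c i \<subseteq> Xs c j"
  by (induction j) (auto simp: le_Suc_eq)

lemma Xs_mem: "i < j \<Longrightarrow> c (Xs c i) i \<in> Xs c j"
  using Xs_mono[of "Suc i" j c] by auto

lemma compact_in_base:
  assumes H: "Hausdorff_space (T0 a)" and K: "compactin (T0 a) K"
  shows "\<exists>F n. finite F \<and> K \<subseteq> setsum F (nsum (Am a 0) n)"
proof (rule ccontr)
  let ?A = "Am a 0"
  assume "\<not> ?thesis"
  then have ex: "\<exists>y. y \<in> K \<and> y \<notin> setsum F (nsum ?A n)" if "finite F" for F n
    using that by blast
  define c where "c F n = (SOME y. y \<in> K \<and> y \<notin> setsum F (nsum ?A n))" for F n
  have c: "c F n \<in> K \<and> c F n \<notin> setsum F (nsum ?A n)" if "finite F" for F n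
    unfolding c_def by (rule someI_ex[OF ex[OF that]])
  define x where "x j = c (Xs c j) j" for j
  have xK: "x j \<in> K" for j using c finite_Xs unfolding x_def by blast
  have notin: "x j - x i \<notin> nsum ?A j" if "i < j" for i j
  proof
    assume "x j - x i \<in> nsum ?A j"
    moreover have "x i \<in> Xs c j" using Xs_mem[OF that] unfolding x_def .
    moreover have "x j = x i + (x j - x i)" by simp
    ultimately have "x j \<in> setsum (Xs c j) (nsum ?A j)"
      unfolding setsum_def by blast
    then show False using c[OF finite_Xs] unfolding x_def by blast
  qed
  have exM: "\<exists>m'. \<forall>u\<in>UU a m'. x j - x i + u \<notin> nsum ?A j" if ij: "i < j" for i j
  proof -
    have "closedin (T0 a) (nsum ?A j)" using compactin_imp_closedin[OF H compact_nsum] .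
    then have "openin (T0 a) (- nsum ?A j)" by (simp add: closedin_def Compl_eq_Diff_UNIV)
    then obtain m' where "(\<lambda>u. (x j - x i) + u) ` UU a m' \<subseteq> - nsum ?A j"
      using notin[OF ij] unfolding openin_T0 by blast
    then show ?thesis by blast
  qed
  define M where "M i j = (SOME m'. \<forall>u\<in>UU a m'. x j - x i + u \<notin> nsum ?A j)" for i j
  have M: "x j - x i + u \<notin> nsum ?A j" if "i < j" "u \<in> UU a (M i j)" for i j u
    using someI_ex[OF exM[OF that(1)]] that(2) unfolding M_def by blast
  define m where "m p = (\<Sum>j<Suc p. \<Sum>i<j. M i j (p - j))" for p
  have mge: "M i j (p - j) \<le> m p" if "i < j" "j \<le> p" for i j p
  proof -
    have "M i j (p - j) \<le> (\<Sum>i<j. M i j (p - j))"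
      using that by (intro member_le_sum) auto
    also have "\<dots> \<le> m p" unfolding m_def
      using that by (intro member_le_sum[of j "{..<Suc p}" "\<lambda>j. \<Sum>i<j. M i j (p - j)"]) auto
    finally show ?thesis .
  qed
  have sep: "x j - x i \<notin> UU a m" if "i < j" for i j
  proof
    assume "x j - x i \<in> UU a m"
    then obtain k f where d: "x j - x i = (\<Sum>q<k. f q)" and f: "\<forall>q<k. f q \<in> Am a (m q)"
      unfolding UU_def by auto
    have fA: "\<forall>q<k. f q \<in> ?A" using f Am_anti[of 0] by blast
    show False
    proof (cases "k \<le> j")
      case True
      then have "(\<Sum>q<k. f q) \<in> nsum ?A j"
        using nsum_sum[OF fA] nsum_mono[of ?A k j] by auto
      then show False using notin[OF that] d by simp
    next
      case False
      define n where "n = k - j"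
      have k: "k = j + n" using False n_def by simp
      have s1: "(\<Sum>q<j. f q) \<in> nsum ?A j" using nsum_sum[of j f ?A] fA k by auto
      have "\<forall>r<n. f (j + r) \<in> Am a (M i j r)"
      proof (intro allI impI)
        fix r assume "r < n"
        then have "f (j + r) \<in> Am a (m (j + r))" using f k by auto
        moreover have "M i j r \<le> m (j + r)" using mge[OF that, of "j + r"] by simp
        ultimately show "f (j + r) \<in> Am a (M i j r)" using Am_anti by blast
      qed
      then have u: "(\<Sum>r<n. f (j + r)) \<in> UU a (M i j)" unfolding UU_def by blast
      have "x j - x i + (- (\<Sum>r<n. f (j + r))) = (\<Sum>q<j. f q)"
        using d k sum_split_shift[of f j n] by simp
      then show False using M[OF that UU_uminus[OF u]] s1 by simp
    qed
  qed
  obtain m'' where m'': "\<forall>x\<in>UU a m''. \<forall>y\<in>UU a m''. x + y \<in> UU a m" using UU_half by blast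
  obtain F where F: "finite F" "\<forall>x\<in>K. \<exists>f\<in>F. x - f \<in> UU a m''" using TB[OF K] by blast
  define g where "g j = (SOME f. f \<in> F \<and> x j - f \<in> UU a m'')" for j
  have g: "g j \<in> F \<and> x j - g j \<in> UU a m''" for j
    unfolding g_def by (rule someI_ex) (use F(2) xK in blast)
  have "\<not> inj g"
  proof
    assume "inj g"
    then have "infinite (range g)" using finite_imageD by blast
    moreover have "range g \<subseteq> F" using g by blast
    ultimately show False using F(1) finite_subset by blast
  qed
  then obtain p q where pq: "p \<noteq> q" "g p = g q" unfolding inj_def by blast
  have close: "x p - x q \<in> UU a m" if "g p = g q" for p q
  proof -
    have "(x p - g p) + (- (x q - g q)) \<in> UU a m"
      using m'' g[of p] UU_uminus[OF conjunct2[OF g[of q]]] by blast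
    then show ?thesis using that by (simp add: algebra_simps)
  qed
  show False
  proof (cases "p < q")
    case True then show False using sep[OF True] close[of q p] pq by simp
  next
    case False then have "q < p" using pq by simp
    then show False using sep close[of p q] pq by blast
  qed
qed




lemma compact_prec:
  assumes H: "Hausdorff_space (T0 a)" and C: "compactin (T0 a) C"
  shows "C \<in> precompacts (T0 a)"
proof -
  have "closedin (T0 a) C" by (rule compactin_imp_closedin[OF H C])
  then have "(T0 a) closure_of C = C" by (rule closure_of_closedin)
  then show ?thesis using C unfolding precompacts_def by simp
qed

lemma prec_iff:
  assumes H: "Hausdorff_space (T0 a)"
  shows "B \<in> precompacts (T0 a) \<longleftrightarrow> (\<exists>F n. finite F \<and> B \<subseteq> setsum F (nsum (Am a 0) n))"
proof
  assume "B \<in> precompacts (T0 a)"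
  then have c: "compactin (T0 a) ((T0 a) closure_of B)" unfolding precompacts_def by simp
  have "B \<subseteq> (T0 a) closure_of B" by (rule closure_of_subset) simp
  then show "\<exists>F n. finite F \<and> B \<subseteq> setsum F (nsum (Am a 0) n)"
    using compact_in_base[OF H c] by blast
next
  assume "\<exists>F n. finite F \<and> B \<subseteq> setsum F (nsum (Am a 0) n)"
  then obtain F n where F: "finite F" "B \<subseteq> setsum F (nsum (Am a 0) n)" by blast
  let ?C = "setsum F (nsum (Am a 0) n)"
  have cC: "compactin (T0 a) ?C" by (rule compact_F_nsum[OF F(1)])
  have "(T0 a) closure_of ?C = ?C" by (rule closure_of_closedin[OF compactin_imp_closedin[OF H cC]])
  then have "(T0 a) closure_of B \<subseteq> ?C" using closure_of_mono[OF F(2), of "T0 a"] by simp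
  then have "compactin (T0 a) ((T0 a) closure_of B)"
    by (rule closed_compactin[OF cC]) simp
  then show "B \<in> precompacts (T0 a)" unfolding precompacts_def by simp
qed

lemma setsum_memI: "x \<in> X \<Longrightarrow> y \<in> Y \<Longrightarrow> x + y \<in> setsum X Y"
  unfolding setsum_def by blast

lemma setdiff_memI: "x \<in> X \<Longrightarrow> y \<in> Y \<Longrightarrow> x - y \<in> setdiff X Y"
  unfolding setdiff_def by blast

lemma setsum_memE: "z \<in> setsum X Y \<Longrightarrow> (\<And>x y. x \<in> X \<Longrightarrow> y \<in> Y \<Longrightarrow> z = x + y \<Longrightarrow> P) \<Longrightarrow> P"
  unfolding setsum_def by blast

lemma setdiff_memE: "z \<in> setdiff X Y \<Longrightarrow> (\<And>x y. x \<in> X \<Longrightarrow> y \<in> Y \<Longrightarrow> z = x - y \<Longrightarrow> P) \<Longrightarrow> P"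
  unfolding setdiff_def by blast

lemma setdiff_sub:
  assumes "B \<subseteq> setsum F (nsum A n)" "C \<subseteq> setsum F' (nsum A n')" "\<forall>x\<in>A. - x \<in> A"
  shows "setdiff B C \<subseteq> setsum (setdiff F F') (nsum A (n + n'))"
proof
  fix z assume "z \<in> setdiff B C"
  then obtain b c where bc: "b \<in> B" "c \<in> C" "z = b - c" by (rule setdiff_memE)
  from bc(1) assms(1) have "b \<in> setsum F (nsum A n)" by (rule subsetD[rotated])
  then obtain f s where fs: "f \<in> F" "s \<in> nsum A n" "b = f + s" by (rule setsum_memE)
  from bc(2) assms(2) have "c \<in> setsum F' (nsum A n')" by (rule subsetD[rotated])
  then obtain f' s' where fs': "f' \<in> F'" "s' \<in> nsum A n'" "c = f' + s'" by (rule setsum_memE)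
  have "- s' \<in> nsum A n'" using nsum_uminus[OF assms(3) fs'(2)] .
  then have "s + (- s') \<in> setsum (nsum A n) (nsum A n')" using fs(2) by (intro setsum_memI)
  then have 1: "s + (- s') \<in> nsum A (n + n')" using nsum_add[of A n n'] by (rule subsetD[rotated])
  have 2: "f - f' \<in> setdiff F F'" using fs(1) fs'(1) by (rule setdiff_memI)
  have "z = (f - f') + (s + (- s'))" using bc fs fs' by (simp add: algebra_simps)
  then show "z \<in> setsum (setdiff F F') (nsum A (n + n'))"
    using setsum_memI[OF 2 1] by simp
qed

lemma finite_setdiff: "finite F \<Longrightarrow> finite F' \<Longrightarrow> finite (setdiff F F')"
proof -
  assume "finite F" "finite F'"
  then have fin: "finite ((\<lambda>p. fst p - snd p) ` (F \<times> F'))" by simp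
  have "setdiff F F' \<subseteq> (\<lambda>p. fst p - snd p) ` (F \<times> F')"
  proof
    fix z assume "z \<in> setdiff F F'"
    then obtain x y where xy: "x \<in> F" "y \<in> F'" "z = x - y" by (rule setdiff_memE)
    then have "(x, y) \<in> F \<times> F'" by simp
    then have "fst (x, y) - snd (x, y) \<in> (\<lambda>p. fst p - snd p) ` (F \<times> F')" by (rule imageI)
    then show "z \<in> (\<lambda>p. fst p - snd p) ` (F \<times> F')" using xy(3) by simp
  qed
  from finite_subset[OF this fin] show ?thesis .
qed

lemma setsum_in_ideal:
  assumes "group_ideal I" "U \<in> I" "V \<in> I"
  shows "setsum U V \<in> I"
proof -
  have G: "(\<forall>F. finite F \<longrightarrow> F \<in> I) \<and> (\<forall>A\<in>I. \<forall>B\<in>I. setdiff A B \<in> I) \<and> (\<forall>A\<in>I. \<forall>C. C \<subseteq> A \<longrightarrow> C \<in> I)"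
    using assms(1) unfolding group_ideal_def .
  have I1: "\<And>F. finite F \<Longrightarrow> F \<in> I" using G[THEN conjunct1] by simp
  have I2: "\<And>A B. A \<in> I \<Longrightarrow> B \<in> I \<Longrightarrow> setdiff A B \<in> I"
    using G[THEN conjunct2, THEN conjunct1] by simp
  have I3: "\<And>A C. A \<in> I \<Longrightarrow> C \<subseteq> A \<Longrightarrow> C \<in> I"
    using G[THEN conjunct2, THEN conjunct2] by simp
  have "setdiff {0} V \<in> I" by (rule I2[OF I1 assms(3)]) simp
  then have d: "setdiff U (setdiff {0} V) \<in> I" by (rule I2[OF assms(2)])
  have "setsum U V \<subseteq> setdiff U (setdiff {0} V)"
  proof
    fix z assume "z \<in> setsum U V"
    then obtain u v where uv: "u \<in> U" "v \<in> V" "z = u + v" by (rule setsum_memE)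
    have "0 - v \<in> setdiff {0} V" using uv(2) by (intro setdiff_memI) simp_all
    then have "u - (0 - v) \<in> setdiff U (setdiff {0} V)" using uv(1) by (rule setdiff_memI[rotated])
    then show "z \<in> setdiff U (setdiff {0} V)" using uv(3) by simp
  qed
  then show ?thesis by (rule I3[OF d])
qed

lemma A_eq: "{0} \<union> range a \<union> range (\<lambda>n. - a n) = Am a 0"
  unfolding Am_def by auto

lemma Am0_symm: "\<forall>x\<in>Am a 0. - x \<in> Am a 0" using Am_uminus by blast




theorem theorem1:
  fixes a :: "nat \<Rightarrow> 'a::ab_group_add"
  assumes Ts: "T_sequence a"
  defines "A \<equiv> {0} \<union> range a \<union> range (\<lambda>n. - a n)"
  shows "is_base {setsum F (nsum A n) | F n. finite F} (precompacts (tau a))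
       \<and> precompacts (tau a) = seq_ideal (tau a)
       \<and> (gen_subgroup (range a) = UNIV \<longrightarrow> is_base (range (nsum A)) (precompacts (tau a)))"
proof -
  have AA: "A = Am a 0" unfolding A_def by (rule A_eq)
  have H: "Hausdorff_space (T0 a)" by (rule Hausdorff_T0[OF Ts])
  have tau: "tau a = T0 a" by (rule tau_eq)
  have symm: "\<forall>x\<in>A. - x \<in> A" unfolding AA by (rule Am0_symm)
  have z: "0 \<in> A" unfolding AA by simp
  have piff: "B \<in> precompacts (T0 a) \<longleftrightarrow> (\<exists>F n. finite F \<and> B \<subseteq> setsum F (nsum A n))" for B
    unfolding AA by (rule prec_iff[OF H])
  have pI: "B \<in> precompacts (T0 a)" if "finite F" "B \<subseteq> setsum F (nsum A n)" for B F n
    using piff[of B] that by blast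
  have pE: "\<exists>F n. finite F \<and> B \<subseteq> setsum F (nsum A n)" if "B \<in> precompacts (T0 a)" for B
    using piff[of B] that by simp
  have part1: "is_base {setsum F (nsum A n) | F n. finite F} (precompacts (T0 a))"
    unfolding is_base_def
  proof (intro conjI ballI subsetI)
    fix D assume "D \<in> {setsum F (nsum A n) | F n. finite F}"
    then obtain F n where "finite F" "D = setsum F (nsum A n)" by blast
    then show "D \<in> precompacts (T0 a)" using pI[of F D n] by simp
  next
    fix B assume "B \<in> precompacts (T0 a)"
    then obtain F n where "finite F" "B \<subseteq> setsum F (nsum A n)" using pE by blast
    then show "\<exists>D\<in>{setsum F (nsum A n) | F n. finite F}. B \<subseteq> D" by blast
  qed
  have gi: "group_ideal (precompacts (T0 a))"
    unfolding group_ideal_def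
  proof (intro conjI allI impI ballI)
    fix F :: "'a set" assume "finite F"
    moreover have "F \<subseteq> setsum F (nsum A 0)"
    proof
      fix x assume "x \<in> F"
      then have "x + 0 \<in> setsum F (nsum A 0)" by (intro setsum_memI) simp_all
      then show "x \<in> setsum F (nsum A 0)" by simp
    qed
    ultimately show "F \<in> precompacts (T0 a)" by (rule pI)
  next
    fix B C assume "B \<in> precompacts (T0 a)" "C \<in> precompacts (T0 a)"
    then obtain F n F' n' where "finite F" "B \<subseteq> setsum F (nsum A n)" "finite F'" "C \<subseteq> setsum F' (nsum A n')"
      using pE by meson
    then have "finite (setdiff F F')" "setdiff B C \<subseteq> setsum (setdiff F F') (nsum A (n + n'))"
      using finite_setdiff setdiff_sub[OF _ _ symm] by simp_all
    then show "setdiff B C \<in> precompacts (T0 a)" by (rule pI)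
  next
    fix B C assume "B \<in> precompacts (T0 a)" "C \<subseteq> B"
    then obtain F n where "finite F" "B \<subseteq> setsum F (nsum A n)" using pE by blast
    then show "C \<in> precompacts (T0 a)" using \<open>C \<subseteq> B\<close> by (intro pI[of F C n]) auto
  qed
  have seqs: "insert x (range xs) \<in> precompacts (T0 a)" if "limitin (T0 a) xs x sequentially" for x xs
    by (rule compact_prec[OF H compactin_sequence_with_limit[OF that]]) auto
  have sub1: "seq_ideal (T0 a) \<subseteq> precompacts (T0 a)"
    unfolding seq_ideal_def
  proof (rule Inter_lower, intro CollectI conjI allI impI)
    show "group_ideal (precompacts (T0 a))" by (rule gi)
  next
    fix x xs assume "limitin (T0 a) xs x sequentially"
    then show "insert x (range xs) \<in> precompacts (T0 a)" by (rule seqs)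
  qed
  have sub2: "precompacts (T0 a) \<subseteq> seq_ideal (T0 a)"
  proof
    fix B assume "B \<in> precompacts (T0 a)"
    then obtain F n where F: "finite F" "B \<subseteq> setsum F (nsum A n)" using pE by blast
    show "B \<in> seq_ideal (T0 a)" unfolding seq_ideal_def
    proof (rule InterI)
      fix I assume "I \<in> {I. group_ideal I \<and> (\<forall>x xs. limitin (T0 a) xs x sequentially \<longrightarrow> insert x (range xs) \<in> I)}"
      then have I: "group_ideal I" and Is: "\<forall>x xs. limitin (T0 a) xs x sequentially \<longrightarrow> insert x (range xs) \<in> I"
        by simp_all
      have G: "(\<forall>F. finite F \<longrightarrow> F \<in> I) \<and> (\<forall>A\<in>I. \<forall>B\<in>I. setdiff A B \<in> I) \<and> (\<forall>A\<in>I. \<forall>C. C \<subseteq> A \<longrightarrow> C \<in> I)"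
        using I unfolding group_ideal_def .
      have I1: "\<And>F. finite F \<Longrightarrow> F \<in> I" using G[THEN conjunct1] by simp
      have I2: "\<And>A B. A \<in> I \<Longrightarrow> B \<in> I \<Longrightarrow> setdiff A B \<in> I"
        using G[THEN conjunct2, THEN conjunct1] by simp
      have I3: "\<And>A C. A \<in> I \<Longrightarrow> C \<subseteq> A \<Longrightarrow> C \<in> I"
        using G[THEN conjunct2, THEN conjunct2] by simp
      have X: "insert 0 (range a) \<in> I" using Is limit_T0[of a] by simp
      have "A \<subseteq> setdiff (insert 0 (range a)) (insert 0 (range a))"
      proof
        fix y assume "y \<in> A"
        then consider "y = 0" | n where "y = a n" | n where "y = - a n" unfolding A_def by blast
        then show "y \<in> setdiff (insert 0 (range a)) (insert 0 (range a))"
        proof cases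
          case 1 then have "y = 0 - 0" by simp
          then show ?thesis using setdiff_memI[of 0 "insert 0 (range a)" 0 "insert 0 (range a)"] by simp
        next
          case (2 n) then have "y = a n - 0" by simp
          then show ?thesis using setdiff_memI[of "a n" "insert 0 (range a)" 0 "insert 0 (range a)"] by simp
        next
          case (3 n) then have "y = 0 - a n" by simp
          then show ?thesis using setdiff_memI[of 0 "insert 0 (range a)" "a n" "insert 0 (range a)"] by simp
        qed
      qed
      then have AI: "A \<in> I" by (rule I3[OF I2[OF X X]])
      have nI: "nsum A k \<in> I" for k
      proof (induction k)
        case 0 then show ?case by (simp add: I1)
      next
        case (Suc k) then show ?case by (simp add: setsum_in_ideal[OF I AI])
      qed
      have "setsum F (nsum A n) \<in> I" by (rule setsum_in_ideal[OF I I1[OF F(1)] nI])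
      then show "B \<in> I" using F(2) by (rule I3)
    qed
  qed
  have part3: "is_base (range (nsum A)) (precompacts (T0 a))" if gen: "gen_subgroup (range a) = UNIV"
    unfolding is_base_def
  proof (intro conjI ballI subsetI)
    fix D assume "D \<in> range (nsum A)"
    then obtain n where D: "D = nsum A n" by blast
    have "nsum A n \<subseteq> setsum {0} (nsum A n)"
    proof
      fix x assume "x \<in> nsum A n"
      then have "0 + x \<in> setsum {0} (nsum A n)" by (intro setsum_memI) simp_all
      then show "x \<in> setsum {0} (nsum A n)" by simp
    qed
    then show "D \<in> precompacts (T0 a)" unfolding D by (intro pI[of "{0}"]) simp_all
  next
    fix B assume "B \<in> precompacts (T0 a)"
    then obtain F n where F: "finite F" "B \<subseteq> setsum F (nsum A n)" using pE by blast
    define H where "H = \<Union> (range (nsum A))"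
    have "is_subgroup H" unfolding is_subgroup_def
    proof (intro conjI ballI)
      show "0 \<in> H" unfolding H_def using nsum.simps(1)[of A] by blast
    next
      fix x y assume "x \<in> H" "y \<in> H"
      then obtain p q where pq: "x \<in> nsum A p" "y \<in> nsum A q" unfolding H_def by blast
      then have "- y \<in> nsum A q" using nsum_uminus[OF symm] by simp
      then have "x + (- y) \<in> setsum (nsum A p) (nsum A q)" using pq(1) by (intro setsum_memI)
      then have "x + (- y) \<in> nsum A (p + q)" using nsum_add[of A p q] by (rule subsetD[rotated])
      then show "x - y \<in> H" unfolding H_def by auto
    qed
    moreover have "range a \<subseteq> H"
    proof
      fix y assume "y \<in> range a"
      then have "y \<in> A" unfolding A_def by auto
      then have "y + 0 \<in> setsum A (nsum A 0)" by (intro setsum_memI) simp_all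
      then have "y \<in> nsum A 1" by simp
      then show "y \<in> H" unfolding H_def by blast
    qed
    ultimately have "gen_subgroup (range a) \<subseteq> H" unfolding gen_subgroup_def by (rule Inter_lower[OF CollectI, OF conjI])
    then have all: "\<exists>k. g \<in> nsum A k" for g using gen unfolding H_def by blast
    have "\<exists>N. F \<subseteq> nsum A N" using F(1)
    proof (induction F rule: finite_induct)
      case empty then show ?case by blast
    next
      case (insert f F)
      then obtain N where N: "F \<subseteq> nsum A N" by blast
      obtain k where k: "f \<in> nsum A k" using all by blast
      have "F \<subseteq> nsum A (max N k)" "f \<in> nsum A (max N k)"
        using N k nsum_mono[OF z, of N "max N k"] nsum_mono[OF z, of k "max N k"] by auto
      then show ?case by blast
    qed
    then obtain N where N: "F \<subseteq> nsum A N" by blast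
    have "setsum F (nsum A n) \<subseteq> nsum A (N + n)"
    proof
      fix z assume "z \<in> setsum F (nsum A n)"
      then obtain f s where fs: "f \<in> F" "s \<in> nsum A n" "z = f + s" by (rule setsum_memE)
      then have "f + s \<in> setsum (nsum A N) (nsum A n)" using N by (intro setsum_memI) auto
      then show "z \<in> nsum A (N + n)" using nsum_add[of A N n] fs(3) by auto
    qed
    then show "\<exists>D\<in>range (nsum A). B \<subseteq> D" using F(2) by blast
  qed
  show ?thesis unfolding tau using part1 sub1 sub2 part3 by (intro conjI impI subset_antisym)
qed


end
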